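(* Let $n,m\in\mathbb{N}$ and suppose: (A1) $X_1,\ldots,X_n,Y_1,\ldots,Y_m$ are GTAI; $\Theta_1,\ldots,\Theta_n,\Delta_1,\ldots,\Delta_m$ are non-negative, non-degenerate at zero, arbitrarily dependent random variables with distributions whose supports are bounded from above, and $(\Theta_1,\ldots,\Theta_n,\Delta_1,\ldots,\Delta_m)$ is independent of $(X_1,\ldots,X_n,Y_1,\ldots,Y_m)$; (A2) $X_i$ has distribution $F_i\in\mathcal{D}\cap\mathcal{L}$ and $Y_j$ has distribution $G_j\in\mathcal{D}\cap\mathcal{L}$ for all $i,j$; for each $i\le n\wedge m$ the pair $(X_i,Y_i)$ is SAI with some constant $C_i>0$; and $X_i$, $Y_j$ are independent whenever $i\neq j$. Let $a:[0,\infty)\to(0,\infty)$ satisfy $a(x)\to\infty$ and $a(x)=o(x)$ as $x\to\infty$. Then for every $1\le i\neq k\le n$ and every $j=1,\ldots,m$, $$\mathbb{P}(\Theta_iX_i>x,\;\Delta_jY_j>y,\;\Theta_k|X_k|>a(x))=o\big(\mathbb{P}(\Theta_iX_i>x,\;\Delta_jY_j>y)\big),\qquad x\wedge y\to\infty.$$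
   Context: All distributions considered have infinite right endpoint: $\overline V(x)=1-V(x)>0$ for all $x$. A distribution $V$ belongs to $\mathcal{D}$ (dominated variation) if $\limsup_{x\to\infty}\overline V(tx)/\overline V(x)<\infty$ for some (equivalently all) $t\in(0,1)$; it belongs to $\mathcal{L}$ (long tail) if $\lim_{x\to\infty}\overline V(x-a)/\overline V(x)=1$ for all $a>0$. SAI (strong asymptotic independence): real random variables $X,Y$ with distributions $F,G$ are SAI with constant $C>0$ if, as $x\wedge y\to\infty$, $\mathbb{P}(X^->x,Y>y)=O(F(-x)\overline G(y))$, $\mathbb{P}(X>x,Y^->y)=O(\overline F(x)G(-y))$ and $\mathbb{P}(X>x,Y>y)\sim C\,\overline F(x)\overline G(y)$, where $z^-=\max\{-z,0\}$. GTAI: real random variables $X_1,\ldots,X_n,Y_1,\ldots,Y_m$ with supports unbounded above are GTAI if $\lim_{x_i\wedge x_k\wedge y_j\to\infty}\mathbb{P}(|X_i|>x_i\mid X_k>x_k,Y_j>y_j)=0$ for all $1\le i\neq k\le n$, $1\le j\le m$, and $\lim_{x_i\wedge y_j\wedge y_k\to\infty}\mathbb{P}(|Y_j|>y_j\mid X_i>x_i,Y_k>y_k)=0$ for all $1\le j\neq k\le m$, $1\le i\le n$. For bivariate positive functions, $f=o(g)$ as $x\wedge y\to\infty$ means $f(x,y)/g(x,y)\to0$ as $\min\{x,y\}\to\infty$. *)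

theory Defs
  imports "HOL-Probability.Probability" "HOL-Library.Landau_Symbols"
begin

definition rtail :: "real measure \<Rightarrow> real \<Rightarrow> real" where
  "rtail V x = measure V {x<..}"

definition cdf_at :: "real measure \<Rightarrow> real \<Rightarrow> real" where
  "cdf_at V x = measure V {..x}"

definition inf_right_endpoint :: "real measure \<Rightarrow> bool" where
  "inf_right_endpoint V \<longleftrightarrow> (\<forall>x. rtail V x > 0)"

definition dominated_variation :: "real measure \<Rightarrow> bool" where
  "dominated_variation V \<longleftrightarrow>
     (\<exists>t\<in>{0<..<1}. Limsup at_top (\<lambda>x. ereal (rtail V (t * x) / rtail V x)) < \<infinity>)"

definition long_tailed :: "real measure \<Rightarrow> bool" where
  "long_tailed V \<longleftrightarrow> (\<forall>a>0. ((\<lambda>x. rtail V (x - a) / rtail V x) \<longlongrightarrow> 1) at_top)"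

definition SAI :: "'a measure \<Rightarrow> ('a \<Rightarrow> real) \<Rightarrow> ('a \<Rightarrow> real) \<Rightarrow> real \<Rightarrow> bool" where
  "SAI M X Y C \<longleftrightarrow> C > 0 \<and>
     (\<lambda>(x,y). measure M {\<omega>\<in>space M. max (- X \<omega>) 0 > x \<and> Y \<omega> > y})
        \<in> O[at_top \<times>\<^sub>F at_top](\<lambda>(x,y). cdf_at (distr M borel X) (- x) * rtail (distr M borel Y) y) \<and>
     (\<lambda>(x,y). measure M {\<omega>\<in>space M. X \<omega> > x \<and> max (- Y \<omega>) 0 > y})
        \<in> O[at_top \<times>\<^sub>F at_top](\<lambda>(x,y). rtail (distr M borel X) x * cdf_at (distr M borel Y) (- y)) \<and>
     (\<lambda>(x,y). measure M {\<omega>\<in>space M. X \<omega> > x \<and> Y \<omega> > y})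
        \<sim>[at_top \<times>\<^sub>F at_top] (\<lambda>(x,y). C * rtail (distr M borel X) x * rtail (distr M borel Y) y)"

definition cprob :: "'a measure \<Rightarrow> 'a set \<Rightarrow> 'a set \<Rightarrow> real" where
  "cprob M A B = measure M (A \<inter> B) / measure M B"

definition GTAI :: "'a measure \<Rightarrow> nat \<Rightarrow> (nat \<Rightarrow> 'a \<Rightarrow> real) \<Rightarrow> nat \<Rightarrow> (nat \<Rightarrow> 'a \<Rightarrow> real) \<Rightarrow> bool" where
  "GTAI M n X m Y \<longleftrightarrow>
     (\<forall>i\<in>{1..n}. \<forall>x. measure M {\<omega>\<in>space M. X i \<omega> > x} > 0) \<and>
     (\<forall>j\<in>{1..m}. \<forall>y. measure M {\<omega>\<in>space M. Y j \<omega> > y} > 0) \<and>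
     (\<forall>i\<in>{1..n}. \<forall>k\<in>{1..n}. \<forall>j\<in>{1..m}. i \<noteq> k \<longrightarrow>
        ((\<lambda>(xi, xk, yj). cprob M {\<omega>\<in>space M. \<bar>X i \<omega>\<bar> > xi}
                                   {\<omega>\<in>space M. X k \<omega> > xk \<and> Y j \<omega> > yj})
          \<longlongrightarrow> 0) (at_top \<times>\<^sub>F at_top \<times>\<^sub>F at_top)) \<and>
     (\<forall>j\<in>{1..m}. \<forall>k\<in>{1..m}. \<forall>i\<in>{1..n}. j \<noteq> k \<longrightarrow>
        ((\<lambda>(yj, xi, yk). cprob M {\<omega>\<in>space M. \<bar>Y j \<omega>\<bar> > yj}
                                   {\<omega>\<in>space M. X i \<omega> > xi \<and> Y k \<omega> > yk})
          \<longlongrightarrow> 0) (at_top \<times>\<^sub>F at_top \<times>\<^sub>F at_top))"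

end

theory Submission
  imports Defs
begin

lemma core:
  fixes M :: "'a measure" and T1 T2 Z1 Z2 Z3 :: "'a \<Rightarrow> real"
  assumes M: "prob_space M"
    and m[measurable]: "T1 \<in> borel_measurable M" "T2 \<in> borel_measurable M"
       "Z1 \<in> borel_measurable M" "Z2 \<in> borel_measurable M" "Z3 \<in> borel_measurable M"
    and ind: "prob_space.indep_var M (borel \<Otimes>\<^sub>M (borel \<Otimes>\<^sub>M borel)) (\<lambda>\<omega>. (T1 \<omega>, T2 \<omega>, 0))
                (borel \<Otimes>\<^sub>M (borel \<Otimes>\<^sub>M borel)) (\<lambda>\<omega>. (Z1 \<omega>, Z2 \<omega>, Z3 \<omega>))"
    and ae: "AE \<omega> in M. 0 \<le> T1 \<omega> \<and> T1 \<omega> \<le> B \<and> 0 \<le> T2 \<omega> \<and> T2 \<omega> \<le> B"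
    and B: "B > 0" and c: "c > 0"
    and H: "\<And>v w. v \<ge> N \<Longrightarrow> w \<ge> N \<Longrightarrow>
       measure M ({\<omega>\<in>space M. \<bar>Z3 \<omega>\<bar> > u} \<inter> {\<omega>\<in>space M. Z1 \<omega> > v \<and> Z2 \<omega> > w})
         \<le> c * measure M {\<omega>\<in>space M. Z1 \<omega> > v \<and> Z2 \<omega> > w}"
    and x: "x \<ge> N * B" "x > 0" and y: "y \<ge> N * B" "y > 0"
  shows "measure M {\<omega>\<in>space M. T1 \<omega> * Z1 \<omega> > x \<and> T2 \<omega> * Z2 \<omega> > y \<and> \<bar>Z3 \<omega>\<bar> > u}
     \<le> c * measure M {\<omega>\<in>space M. T1 \<omega> * Z1 \<omega> > x \<and> T2 \<omega> * Z2 \<omega> > y}"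
proof -
  interpret prob_space M by (rule M)
  define MT where "MT = (borel \<Otimes>\<^sub>M (borel \<Otimes>\<^sub>M borel) :: (real \<times> real \<times> real) measure)"
  define MZ where "MZ = (borel \<Otimes>\<^sub>M (borel \<Otimes>\<^sub>M borel) :: (real \<times> real \<times> real) measure)"
  define T where "T = (\<lambda>\<omega>. (T1 \<omega>, T2 \<omega>, 0::real))"
  define Z where "Z = (\<lambda>\<omega>. (Z1 \<omega>, Z2 \<omega>, Z3 \<omega>))"
  have Tm[measurable]: "T \<in> measurable M MT" unfolding T_def MT_def by measurable
  have Zm[measurable]: "Z \<in> measurable M MZ" unfolding Z_def MZ_def by measurable
  define PT where "PT = distr M MT T"
  define PZ where "PZ = distr M MZ Z"
  interpret PT: prob_space PT unfolding PT_def by (rule prob_space_distr) simp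
  interpret PZ: prob_space PZ unfolding PZ_def by (rule prob_space_distr) simp
  have joint: "PT \<Otimes>\<^sub>M PZ = distr M (MT \<Otimes>\<^sub>M MZ) (\<lambda>\<omega>. (T \<omega>, Z \<omega>))"
    using ind unfolding indep_var_distribution_eq PT_def PZ_def MT_def MZ_def T_def Z_def by blast
  define E where "E = {p\<in>space (MT \<Otimes>\<^sub>M MZ). fst (fst p) * fst (snd p) > x \<and> fst (snd (fst p)) * fst (snd (snd p)) > y}"
  define F where "F = {p\<in>space (MT \<Otimes>\<^sub>M MZ). fst (fst p) * fst (snd p) > x \<and> fst (snd (fst p)) * fst (snd (snd p)) > y \<and> \<bar>snd (snd (snd p))\<bar> > u}"
  have Es: "E \<in> sets (MT \<Otimes>\<^sub>M MZ)" unfolding E_def MT_def MZ_def by measurable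
  have Fs: "F \<in> sets (MT \<Otimes>\<^sub>M MZ)" unfolding F_def MT_def MZ_def by measurable
  have sPT: "sets PT = sets MT" "space PT = space MT" unfolding PT_def by simp_all
  have sPZ: "sets PZ = sets MZ" "space PZ = space MZ" unfolding PZ_def by simp_all
  have Es': "E \<in> sets (PT \<Otimes>\<^sub>M PZ)" using Es unfolding joint by simp
  have Fs': "F \<in> sets (PT \<Otimes>\<^sub>M PZ)" using Fs unfolding joint by simp
  have eqE: "emeasure M {\<omega>\<in>space M. T1 \<omega> * Z1 \<omega> > x \<and> T2 \<omega> * Z2 \<omega> > y} = emeasure (PT \<Otimes>\<^sub>M PZ) E"
    unfolding joint using Es
    by (subst emeasure_distr) (auto simp: E_def space_pair_measure MT_def MZ_def T_def Z_def intro!: arg_cong[where f="emeasure M"])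
  have eqF: "emeasure M {\<omega>\<in>space M. T1 \<omega> * Z1 \<omega> > x \<and> T2 \<omega> * Z2 \<omega> > y \<and> \<bar>Z3 \<omega>\<bar> > u} = emeasure (PT \<Otimes>\<^sub>M PZ) F"
    unfolding joint using Fs
    by (subst emeasure_distr) (auto simp: F_def E_def space_pair_measure MT_def MZ_def T_def Z_def intro!: arg_cong[where f="emeasure M"])
  have aeT: "AE t in PT. 0 \<le> fst t \<and> fst t \<le> B \<and> 0 \<le> fst (snd t) \<and> fst (snd t) \<le> B"
    unfolding PT_def by (subst AE_distr_iff) (use ae in \<open>auto simp: T_def MT_def\<close>)
  have pw: "emeasure PZ (Pair t -` F) \<le> c * emeasure PZ (Pair t -` E)"
    if t: "0 \<le> fst t \<and> fst t \<le> B \<and> 0 \<le> fst (snd t) \<and> fst (snd t) \<le> B" for t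
  proof (cases "fst t = 0 \<or> fst (snd t) = 0")
    case True
    then have "Pair t -` F = {}" using x y by (auto simp: F_def E_def space_pair_measure MT_def MZ_def)
    then show ?thesis by simp
  next
    case False
    then have p: "fst t > 0" "fst (snd t) > 0" using t by auto
    have N0: "N \<le> x / fst t"
    proof -
      have "N \<le> x / B" using x B by (simp add: field_simps)
      also have "x / B \<le> x / fst t" using p t x by (intro divide_left_mono) auto
      finally show ?thesis .
    qed
    have N1: "N \<le> y / fst (snd t)"
    proof -
      have "N \<le> y / B" using y B by (simp add: field_simps)
      also have "y / B \<le> y / fst (snd t)" using p t y by (intro divide_left_mono) auto
      finally show ?thesis .
    qed
    have s1: "Z -` (Pair t -` F) \<inter> space M = {\<omega>\<in>space M. \<bar>Z3 \<omega>\<bar> > u} \<inter> {\<omega>\<in>space M. Z1 \<omega> > x / fst t \<and> Z2 \<omega> > y / fst (snd t)}"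
      using p by (auto simp: F_def E_def space_pair_measure MT_def MZ_def Z_def field_simps mult.commute)
    have s2: "Z -` (Pair t -` E) \<inter> space M = {\<omega>\<in>space M. Z1 \<omega> > x / fst t \<and> Z2 \<omega> > y / fst (snd t)}"
      using p by (auto simp: E_def space_pair_measure MT_def MZ_def Z_def field_simps mult.commute)
    have "emeasure PZ (Pair t -` F) = emeasure M (Z -` (Pair t -` F) \<inter> space M)"
      unfolding PZ_def by (rule emeasure_distr[OF Zm sets_Pair1[OF Fs]])
    also have "\<dots> = ennreal (measure M ({\<omega>\<in>space M. \<bar>Z3 \<omega>\<bar> > u} \<inter> {\<omega>\<in>space M. Z1 \<omega> > x / fst t \<and> Z2 \<omega> > y / fst (snd t)}))"
      by (simp add: s1 emeasure_eq_measure)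
    also have "\<dots> \<le> ennreal (c * measure M {\<omega>\<in>space M. Z1 \<omega> > x / fst t \<and> Z2 \<omega> > y / fst (snd t)})"
      by (intro ennreal_leI H N0 N1)
    also have "\<dots> = c * emeasure M (Z -` (Pair t -` E) \<inter> space M)"
      using c by (simp add: s2 emeasure_eq_measure ennreal_mult)
    also have "emeasure M (Z -` (Pair t -` E) \<inter> space M) = emeasure PZ (Pair t -` E)"
      unfolding PZ_def by (rule emeasure_distr[OF Zm sets_Pair1[OF Es], symmetric])
    finally show ?thesis .
  qed
  have "emeasure (PT \<Otimes>\<^sub>M PZ) F = (\<integral>\<^sup>+t. emeasure PZ (Pair t -` F) \<partial>PT)"
    using Fs' by (rule PZ.emeasure_pair_measure_alt)
  also have "\<dots> \<le> (\<integral>\<^sup>+t. c * emeasure PZ (Pair t -` E) \<partial>PT)"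
    by (intro nn_integral_mono_AE) (use aeT pw in auto)
  also have "\<dots> = c * (\<integral>\<^sup>+t. emeasure PZ (Pair t -` E) \<partial>PT)"
    by (rule nn_integral_cmult) (rule PZ.measurable_emeasure_Pair[OF Es'])
  also have "(\<integral>\<^sup>+t. emeasure PZ (Pair t -` E) \<partial>PT) = emeasure (PT \<Otimes>\<^sub>M PZ) E"
    using Es' by (rule PZ.emeasure_pair_measure_alt[symmetric])
  finally have "emeasure M {\<omega>\<in>space M. T1 \<omega> * Z1 \<omega> > x \<and> T2 \<omega> * Z2 \<omega> > y \<and> \<bar>Z3 \<omega>\<bar> > u}
     \<le> c * emeasure M {\<omega>\<in>space M. T1 \<omega> * Z1 \<omega> > x \<and> T2 \<omega> * Z2 \<omega> > y}"
    using eqE eqF by simp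
  then show ?thesis using c
    by (simp add: emeasure_eq_measure ennreal_mult[symmetric] ennreal_le_iff)
qed


lemma ev3:
  fixes P :: "real \<times> real \<times> real \<Rightarrow> bool"
  assumes "eventually P (at_top \<times>\<^sub>F at_top \<times>\<^sub>F at_top)"
  shows "\<exists>N. \<forall>a b c. a \<ge> N \<longrightarrow> b \<ge> N \<longrightarrow> c \<ge> N \<longrightarrow> P (a, b, c)"
proof -
  obtain Pf Pg where 1: "eventually Pf at_top" "eventually Pg (at_top \<times>\<^sub>F at_top)"
    "\<forall>x y. Pf x \<longrightarrow> Pg y \<longrightarrow> P (x, y)"
    using assms unfolding eventually_prod_filter by blast
  obtain Q1 Q2 where 2: "eventually Q1 at_top" "eventually Q2 at_top"
    "\<forall>x y. Q1 x \<longrightarrow> Q2 y \<longrightarrow> Pg (x, y)"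
    using 1(2) unfolding eventually_prod_filter by blast
  obtain N1 where N1: "\<forall>x\<ge>N1. Pf x" using 1(1) eventually_at_top_linorder by blast
  obtain N2 where N2: "\<forall>x\<ge>N2. Q1 x" using 2(1) eventually_at_top_linorder by blast
  obtain N3 where N3: "\<forall>x\<ge>N3. Q2 x" using 2(2) eventually_at_top_linorder by blast
  show ?thesis
    by (rule exI[of _ "max N1 (max N2 N3)"]) (use 1(3) 2(3) N1 N2 N3 in auto)
qed

theorem lemma2p2:
  fixes M :: "'a measure" and n m :: nat
    and X Y Theta Delta :: "nat \<Rightarrow> 'a \<Rightarrow> real"
    and C :: "nat \<Rightarrow> real" and a :: "real \<Rightarrow> real"
  assumes M: "prob_space M"
    and X_rv: "\<And>i. i \<in> {1..n} \<Longrightarrow> X i \<in> borel_measurable M"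
    and Y_rv: "\<And>j. j \<in> {1..m} \<Longrightarrow> Y j \<in> borel_measurable M"
    and Th_rv: "\<And>i. i \<in> {1..n} \<Longrightarrow> Theta i \<in> borel_measurable M"
    and De_rv: "\<And>j. j \<in> {1..m} \<Longrightarrow> Delta j \<in> borel_measurable M"
    \<comment> \<open>(A1)\<close>
    and gtai: "GTAI M n X m Y"
    and Th_nonneg: "\<And>i. i \<in> {1..n} \<Longrightarrow> \<forall>\<omega>\<in>space M. Theta i \<omega> \<ge> 0"
    and De_nonneg: "\<And>j. j \<in> {1..m} \<Longrightarrow> \<forall>\<omega>\<in>space M. Delta j \<omega> \<ge> 0"
    and Th_nondeg: "\<And>i. i \<in> {1..n} \<Longrightarrow> measure M {\<omega>\<in>space M. Theta i \<omega> = 0} < 1"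
    and De_nondeg: "\<And>j. j \<in> {1..m} \<Longrightarrow> measure M {\<omega>\<in>space M. Delta j \<omega> = 0} < 1"
    and Th_bdd: "\<And>i. i \<in> {1..n} \<Longrightarrow> \<exists>b. measure M {\<omega>\<in>space M. Theta i \<omega> \<le> b} = 1"
    and De_bdd: "\<And>j. j \<in> {1..m} \<Longrightarrow> \<exists>b. measure M {\<omega>\<in>space M. Delta j \<omega> \<le> b} = 1"
    and indep: "prob_space.indep_var M
        (Pi\<^sub>M {1..n} (\<lambda>_. borel) \<Otimes>\<^sub>M Pi\<^sub>M {1..m} (\<lambda>_. borel))
        (\<lambda>\<omega>. (restrict (\<lambda>i. Theta i \<omega>) {1..n}, restrict (\<lambda>j. Delta j \<omega>) {1..m}))
        (Pi\<^sub>M {1..n} (\<lambda>_. borel) \<Otimes>\<^sub>M Pi\<^sub>M {1..m} (\<lambda>_. borel))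
        (\<lambda>\<omega>. (restrict (\<lambda>i. X i \<omega>) {1..n}, restrict (\<lambda>j. Y j \<omega>) {1..m}))"
    \<comment> \<open>(A2)\<close>
    and F_class: "\<And>i. i \<in> {1..n} \<Longrightarrow> inf_right_endpoint (distr M borel (X i)) \<and>
        dominated_variation (distr M borel (X i)) \<and> long_tailed (distr M borel (X i))"
    and G_class: "\<And>j. j \<in> {1..m} \<Longrightarrow> inf_right_endpoint (distr M borel (Y j)) \<and>
        dominated_variation (distr M borel (Y j)) \<and> long_tailed (distr M borel (Y j))"
    and sai: "\<And>i. i \<in> {1..min n m} \<Longrightarrow> SAI M (X i) (Y i) (C i)"
    and indep_XY: "\<And>i j. i \<in> {1..n} \<Longrightarrow> j \<in> {1..m} \<Longrightarrow> i \<noteq> j \<Longrightarrow>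
        prob_space.indep_var M borel (X i) borel (Y j)"
    \<comment> \<open>the function a\<close>
    and a_pos: "\<And>x. x \<ge> 0 \<Longrightarrow> a x > 0"
    and a_lim: "filterlim a at_top at_top"
    and a_small: "a \<in> o[at_top](\<lambda>x. x)"
  shows "\<forall>i\<in>{1..n}. \<forall>k\<in>{1..n}. \<forall>j\<in>{1..m}. i \<noteq> k \<longrightarrow>
     (\<lambda>(x,y). measure M {\<omega>\<in>space M. Theta i \<omega> * X i \<omega> > x \<and> Delta j \<omega> * Y j \<omega> > y
                                    \<and> Theta k \<omega> * \<bar>X k \<omega>\<bar> > a x})
       \<in> o[at_top \<times>\<^sub>F at_top](\<lambda>(x,y). measure M {\<omega>\<in>space M. Theta i \<omega> * X i \<omega> > x
                                                      \<and> Delta j \<omega> * Y j \<omega> > y})"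
  proof (intro ballI impI)
  fix i k j assume i: "i \<in> {1..n}" and k: "k \<in> {1..n}" and j: "j \<in> {1..m}" and ik: "i \<noteq> k"
  interpret prob_space M by (rule M)
  note [measurable] = X_rv[OF i] X_rv[OF k] Y_rv[OF j] Th_rv[OF i] Th_rv[OF k] De_rv[OF j]
  obtain bi where bi: "measure M {\<omega>\<in>space M. Theta i \<omega> \<le> bi} = 1" using Th_bdd[OF i] by blast
  obtain bk where bk: "measure M {\<omega>\<in>space M. Theta k \<omega> \<le> bk} = 1" using Th_bdd[OF k] by blast
  obtain bj where bj: "measure M {\<omega>\<in>space M. Delta j \<omega> \<le> bj} = 1" using De_bdd[OF j] by blast
  define B where "B = max 1 (max bi (max bj bk))"
  have B0: "B > 0" unfolding B_def by simp
  have aei: "AE \<omega> in M. \<omega> \<in> {\<omega>\<in>space M. Theta i \<omega> \<le> bi}" by (rule AE_prob_1[OF bi])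
  have aek: "AE \<omega> in M. \<omega> \<in> {\<omega>\<in>space M. Theta k \<omega> \<le> bk}" by (rule AE_prob_1[OF bk])
  have aej: "AE \<omega> in M. \<omega> \<in> {\<omega>\<in>space M. Delta j \<omega> \<le> bj}" by (rule AE_prob_1[OF bj])
  have ae: "AE \<omega> in M. 0 \<le> Theta i \<omega> \<and> Theta i \<omega> \<le> B \<and> 0 \<le> Delta j \<omega> \<and> Delta j \<omega> \<le> B"
  proof -
    have n1: "AE \<omega> in M. 0 \<le> Theta i \<omega>" using Th_nonneg[OF i] by (auto intro: AE_I2)
    have n2: "AE \<omega> in M. 0 \<le> Delta j \<omega>" using De_nonneg[OF j] by (auto intro: AE_I2)
    show ?thesis using aei aej n1 n2 unfolding B_def by eventually_elim auto
  qed
  have aeK: "AE \<omega> in M. Theta k \<omega> \<le> B"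
    using aek unfolding B_def by eventually_elim auto
  define S where "S = (Pi\<^sub>M {1..n} (\<lambda>_. (borel::real measure)) \<Otimes>\<^sub>M Pi\<^sub>M {1..m} (\<lambda>_. (borel::real measure)))"
  define Y1 where "Y1 = (\<lambda>(f::nat\<Rightarrow>real, g::nat\<Rightarrow>real). (f i, g j, 0::real))"
  define Y2 where "Y2 = (\<lambda>(f::nat\<Rightarrow>real, g::nat\<Rightarrow>real). (f i, g j, f k))"
  have Y1m: "Y1 \<in> measurable S (borel \<Otimes>\<^sub>M (borel \<Otimes>\<^sub>M borel))"
    unfolding Y1_def S_def using i j by measurable
  have Y2m: "Y2 \<in> measurable S (borel \<Otimes>\<^sub>M (borel \<Otimes>\<^sub>M borel))"
    unfolding Y2_def S_def using i j k by measurable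
  have ind2: "indep_var (borel \<Otimes>\<^sub>M (borel \<Otimes>\<^sub>M borel))
      (Y1 \<circ> (\<lambda>\<omega>. (restrict (\<lambda>i. Theta i \<omega>) {1..n}, restrict (\<lambda>j. Delta j \<omega>) {1..m})))
      (borel \<Otimes>\<^sub>M (borel \<Otimes>\<^sub>M borel))
      (Y2 \<circ> (\<lambda>\<omega>. (restrict (\<lambda>i. X i \<omega>) {1..n}, restrict (\<lambda>j. Y j \<omega>) {1..m})))"
    by (rule indep_var_compose[OF indep[folded S_def] Y1m Y2m])
  have e1: "(Y1 \<circ> (\<lambda>\<omega>. (restrict (\<lambda>i. Theta i \<omega>) {1..n}, restrict (\<lambda>j. Delta j \<omega>) {1..m})))
      = (\<lambda>\<omega>. (Theta i \<omega>, Delta j \<omega>, 0))" using i j by (auto simp: Y1_def)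
  have e2: "(Y2 \<circ> (\<lambda>\<omega>. (restrict (\<lambda>i. X i \<omega>) {1..n}, restrict (\<lambda>j. Y j \<omega>) {1..m})))
      = (\<lambda>\<omega>. (X i \<omega>, Y j \<omega>, X k \<omega>))" using i j k by (auto simp: Y2_def)
  have ind3: "indep_var (borel \<Otimes>\<^sub>M (borel \<Otimes>\<^sub>M borel)) (\<lambda>\<omega>. (Theta i \<omega>, Delta j \<omega>, 0))
      (borel \<Otimes>\<^sub>M (borel \<Otimes>\<^sub>M borel)) (\<lambda>\<omega>. (X i \<omega>, Y j \<omega>, X k \<omega>))"
    using ind2 unfolding e1 e2 .
  have lim: "((\<lambda>(xk, xi, yj). cprob M {\<omega>\<in>space M. \<bar>X k \<omega>\<bar> > xk}
                                   {\<omega>\<in>space M. X i \<omega> > xi \<and> Y j \<omega> > yj})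
          \<longlongrightarrow> 0) (at_top \<times>\<^sub>F at_top \<times>\<^sub>F at_top)"
  proof -
    have "\<forall>i\<in>{1..n}. \<forall>k\<in>{1..n}. \<forall>j\<in>{1..m}. i \<noteq> k \<longrightarrow>
        ((\<lambda>(xi, xk, yj). cprob M {\<omega>\<in>space M. \<bar>X i \<omega>\<bar> > xi}
                                   {\<omega>\<in>space M. X k \<omega> > xk \<and> Y j \<omega> > yj})
          \<longlongrightarrow> 0) (at_top \<times>\<^sub>F at_top \<times>\<^sub>F at_top)"
      using gtai unfolding GTAI_def by (elim conjE)
    then show ?thesis using i j k ik by simp
  qed
  show "(\<lambda>(x,y). measure M {\<omega>\<in>space M. Theta i \<omega> * X i \<omega> > x \<and> Delta j \<omega> * Y j \<omega> > y
                                    \<and> Theta k \<omega> * \<bar>X k \<omega>\<bar> > a x})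
       \<in> o[at_top \<times>\<^sub>F at_top](\<lambda>(x,y). measure M {\<omega>\<in>space M. Theta i \<omega> * X i \<omega> > x
                                                      \<and> Delta j \<omega> * Y j \<omega> > y})"
  proof (rule landau_o.smallI)
    fix c :: real assume c: "c > 0"
    have "eventually (\<lambda>p. dist ((\<lambda>(xk, xi, yj). cprob M {\<omega>\<in>space M. \<bar>X k \<omega>\<bar> > xk}
                                   {\<omega>\<in>space M. X i \<omega> > xi \<and> Y j \<omega> > yj}) p) 0 < c)
          (at_top \<times>\<^sub>F at_top \<times>\<^sub>F at_top)"
      by (rule tendstoD[OF lim c])
    from ev3[OF this] obtain N0 where N0: "\<And>u v w. u \<ge> N0 \<Longrightarrow> v \<ge> N0 \<Longrightarrow> w \<ge> N0 \<Longrightarrow>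
        \<bar>cprob M {\<omega>\<in>space M. \<bar>X k \<omega>\<bar> > u} {\<omega>\<in>space M. X i \<omega> > v \<and> Y j \<omega> > w}\<bar> < c"
      by auto
    define N where "N = max N0 1"
    have H: "measure M ({\<omega>\<in>space M. \<bar>X k \<omega>\<bar> > u} \<inter> {\<omega>\<in>space M. X i \<omega> > v \<and> Y j \<omega> > w})
         \<le> c * measure M {\<omega>\<in>space M. X i \<omega> > v \<and> Y j \<omega> > w}"
      if "u \<ge> N" "v \<ge> N" "w \<ge> N" for u v w
    proof -
      let ?A = "{\<omega>\<in>space M. \<bar>X k \<omega>\<bar> > u}" and ?B = "{\<omega>\<in>space M. X i \<omega> > v \<and> Y j \<omega> > w}"
      have lt: "\<bar>measure M (?A \<inter> ?B) / measure M ?B\<bar> < c"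
        using N0[of u v w] that unfolding N_def cprob_def by auto
      show ?thesis
      proof (cases "measure M ?B = 0")
        case True
        have "measure M (?A \<inter> ?B) \<le> measure M ?B" by (intro finite_measure_mono) auto
        then show ?thesis using True by simp
      next
        case False
        then have "measure M ?B > 0" by (simp add: zero_less_measure_iff)
        then show ?thesis using lt by (simp add: field_simps abs_if split: if_splits)
      qed
    qed
    obtain xa where xa: "\<And>x. x \<ge> xa \<Longrightarrow> N * B \<le> a x"
      using a_lim unfolding filterlim_at_top eventually_at_top_linorder by blast
    show "eventually (\<lambda>p. norm ((\<lambda>(x,y). measure M {\<omega>\<in>space M. Theta i \<omega> * X i \<omega> > x \<and> Delta j \<omega> * Y j \<omega> > y
                                    \<and> Theta k \<omega> * \<bar>X k \<omega>\<bar> > a x}) p)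
       \<le> c * norm ((\<lambda>(x,y). measure M {\<omega>\<in>space M. Theta i \<omega> * X i \<omega> > x
                                                      \<and> Delta j \<omega> * Y j \<omega> > y}) p)) (at_top \<times>\<^sub>F at_top)"
      unfolding eventually_prod_filter
    proof (intro exI conjI allI impI)
      show "eventually (\<lambda>x. x \<ge> max xa (max (N * B) 1)) at_top" by (rule eventually_ge_at_top)
      show "eventually (\<lambda>y. y \<ge> max (N * B) 1) at_top" by (rule eventually_ge_at_top)
      fix x y :: real assume x: "x \<ge> max xa (max (N * B) 1)" and y: "y \<ge> max (N * B) 1"
      have ax: "a x / B \<ge> N" using xa[of x] x B0 by (simp add: field_simps)
      have "measure M {\<omega>\<in>space M. Theta i \<omega> * X i \<omega> > x \<and> Delta j \<omega> * Y j \<omega> > y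
                                    \<and> Theta k \<omega> * \<bar>X k \<omega>\<bar> > a x}
         \<le> measure M {\<omega>\<in>space M. Theta i \<omega> * X i \<omega> > x \<and> Delta j \<omega> * Y j \<omega> > y
                                    \<and> \<bar>X k \<omega>\<bar> > a x / B}"
      proof (rule finite_measure_mono_AE)
        show "AE \<omega> in M. \<omega> \<in> {\<omega>\<in>space M. Theta i \<omega> * X i \<omega> > x \<and> Delta j \<omega> * Y j \<omega> > y
                                    \<and> Theta k \<omega> * \<bar>X k \<omega>\<bar> > a x} \<longrightarrow>
           \<omega> \<in> {\<omega>\<in>space M. Theta i \<omega> * X i \<omega> > x \<and> Delta j \<omega> * Y j \<omega> > y
                                    \<and> \<bar>X k \<omega>\<bar> > a x / B}"
          using aeK
        proof eventually_elim
          case (elim \<omega>)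
          show ?case
          proof (intro impI)
            assume h: "\<omega> \<in> {\<omega>\<in>space M. Theta i \<omega> * X i \<omega> > x \<and> Delta j \<omega> * Y j \<omega> > y
                                    \<and> Theta k \<omega> * \<bar>X k \<omega>\<bar> > a x}"
            have "Theta k \<omega> * \<bar>X k \<omega>\<bar> \<le> B * \<bar>X k \<omega>\<bar>" using elim by (intro mult_right_mono) auto
            then have "a x < B * \<bar>X k \<omega>\<bar>" using h by auto
            then have "a x / B < \<bar>X k \<omega>\<bar>" using B0 by (simp add: field_simps)
            then show "\<omega> \<in> {\<omega>\<in>space M. Theta i \<omega> * X i \<omega> > x \<and> Delta j \<omega> * Y j \<omega> > y
                                    \<and> \<bar>X k \<omega>\<bar> > a x / B}" using h by auto
          qed
        qed
      qed measurable
      also have "\<dots> \<le> c * measure M {\<omega>\<in>space M. Theta i \<omega> * X i \<omega> > x \<and> Delta j \<omega> * Y j \<omega> > y}"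
        by (rule core[OF M _ _ _ _ _ ind3 ae B0 c, where N=N]) (use H ax x y in auto)
      finally show "norm ((\<lambda>(x,y). measure M {\<omega>\<in>space M. Theta i \<omega> * X i \<omega> > x \<and> Delta j \<omega> * Y j \<omega> > y
                                    \<and> Theta k \<omega> * \<bar>X k \<omega>\<bar> > a x}) (x, y))
       \<le> c * norm ((\<lambda>(x,y). measure M {\<omega>\<in>space M. Theta i \<omega> * X i \<omega> > x
                                                      \<and> Delta j \<omega> * Y j \<omega> > y}) (x, y))" by simp
    qed
  qed
qed

end
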